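(* Let $1\le k<d$, $t\ge0$, $n\ge1$, $\tau>0$, let $\nu_{k,d}$ be a probabilistic cubature for $\mathrm{Pol}_t(\mathcal{G}_{k,d})$, and let $P_1,\dots,P_n$ be chosen independently according to $\nu_{k,d}$. Then, with probability at least $1-4e^{-\Psi_\tau(n)}r_\tau(n)$, the family $\{(P_j,\frac1n)\}_{j=1}^n$ is a $\sqrt{\frac{(1+\tau^2)k^t-\lambda_t}{n}}$-approximate cubature for $\mathrm{Pol}_t(\mathcal{G}_{k,d})$ with respect to $K_t$, where $$\Psi_\tau(n)=\frac{\tau^2/2}{(1-\lambda_t/k^t)+\frac{\tau}{3\sqrt n}},\qquad r_\tau(n)=1+\frac{6}{n\tau^2\ln^2\!\big(1+\frac{\tau}{\sqrt n(1-\lambda_t/k^t)}\big)}.$$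
   Context: $\mathscr{H}_d$ denotes the real symmetric $d\times d$ matrices with $\langle A,B\rangle=\operatorname{trace}(AB)$. $\mathcal{G}_{k,d}=\{P\in\mathscr{H}_d:P^2=P,\ \operatorname{trace}(P)=k\}$, with orthogonally invariant Borel probability measure $\sigma_{k,d}$. $\mathrm{Pol}_t(\mathcal{G}_{k,d})$ is the space of restrictions to $\mathcal{G}_{k,d}$ of polynomials of degree at most $t$ on $\mathscr{H}_d$. A Borel probability measure $\nu_{k,d}$ on $\mathcal{G}_{k,d}$ is a probabilistic cubature for $\mathrm{Pol}_t(\mathcal{G}_{k,d})$ if $\int f\,d\nu_{k,d}=\int f\,d\sigma_{k,d}$ for all $f\in\mathrm{Pol}_t(\mathcal{G}_{k,d})$. $K_t(P,Q)=\langle P,Q\rangle^t$ is a positive definite kernel on $\mathcal{G}_{k,d}$ whose shifts span $\mathrm{Pol}_t(\mathcal{G}_{k,d})$; it induces the norm $\|f\|_{K_t}^2=\sum_{i,j}c_ic_jK_t(Q_i,Q_j)$ for $f=\sum_ic_iK_t(Q_i,\cdot)$. $\lambda_t=\iint K_t(P,Q)\,d\sigma_{k,d}(P)\,d\sigma_{k,d}(Q)$. A family $\{(P_j,\omega_j)\}_{j=1}^n$ ($P_j\in\mathcal{G}_{k,d}$, $\omega_j\in\mathbb{R}$) is an $\epsilon$-approximate cubature for $\mathrm{Pol}_t(\mathcal{G}_{k,d})$ with respect to $K_t$ if $\sup\{|\sum_j\omega_jf(P_j)-\int f\,d\sigma_{k,d}|:f\in\mathrm{Pol}_t(\mathcal{G}_{k,d}),\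 \|f\|_{K_t}=1\}\le\epsilon$. *)

theory Defs
  imports "HOL-Analysis.Analysis" "HOL-Probability.Probability"
begin

type_synonym 'n mat = "real ^ 'n ^ 'n"

definition mat_inner :: "'n::finite mat \<Rightarrow> 'n mat \<Rightarrow> real" where
  "mat_inner A B = trace (A ** B)"

text \<open>The Grassmannian G_{k,d} realized as orthogonal projections of rank k.\<close>
definition grass :: "nat \<Rightarrow> 'n::finite mat set" where
  "grass k = {P. transpose P = P \<and> P ** P = P \<and> trace P = real k}"

definition orth_inv_prob :: "nat \<Rightarrow> 'n::finite mat measure \<Rightarrow> bool" where
  "orth_inv_prob k \<sigma> \<longleftrightarrow> prob_space \<sigma> \<and> sets \<sigma> = sets (restrict_space borel (grass k)) \<and>
     (\<forall>U. orthogonal_matrix U \<longrightarrow>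
        (\<forall>A\<in>sets \<sigma>. emeasure \<sigma> ((\<lambda>P. U ** P ** transpose U) ` A) = emeasure \<sigma> A))"

text \<open>Monomials in the matrix entries and the polynomials of degree at most t
  (as functions on all matrices; restricted to G_{k,d} where used).\<close>
definition monomial :: "('n \<times> 'n \<Rightarrow> nat) \<Rightarrow> 'n::finite mat \<Rightarrow> real" where
  "monomial \<alpha> P = (\<Prod>ij\<in>UNIV. (P $ fst ij $ snd ij) ^ \<alpha> ij)"

definition Pol :: "nat \<Rightarrow> ('n::finite mat \<Rightarrow> real) set" where
  "Pol t = {f. \<exists>S a. finite S \<and> (\<forall>\<alpha>\<in>S. (\<Sum>ij\<in>UNIV. \<alpha> ij) \<le> t) \<and>
                  f = (\<lambda>P. \<Sum>\<alpha>\<in>S. a \<alpha> * monomial \<alpha> P)}"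

definition Kt :: "nat \<Rightarrow> 'n::finite mat \<Rightarrow> 'n mat \<Rightarrow> real" where
  "Kt t P Q = (mat_inner P Q) ^ t"

definition lambda_t :: "nat \<Rightarrow> 'n::finite mat measure \<Rightarrow> real" where
  "lambda_t t \<sigma> = (\<integral>P. (\<integral>Q. Kt t P Q \<partial>\<sigma>) \<partial>\<sigma>)"

definition prob_cubature :: "nat \<Rightarrow> nat \<Rightarrow> 'n::finite mat measure \<Rightarrow> 'n mat measure \<Rightarrow> bool" where
  "prob_cubature k t \<sigma> \<nu> \<longleftrightarrow> prob_space \<nu> \<and> sets \<nu> = sets (restrict_space borel (grass k)) \<and>
     (\<forall>f\<in>Pol t. (\<integral>P. f P \<partial>\<nu>) = (\<integral>P. f P \<partial>\<sigma>))"

text \<open>The norm is expressed through a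
  representation f = sum_i c_i K_t(Q_i, .) on G_{k,d}, ||f||^2 = sum_{i,j} c_i c_j K_t(Q_i,Q_j).\<close>
definition approx_cubature ::
  "nat \<Rightarrow> nat \<Rightarrow> 'n::finite mat measure \<Rightarrow> nat \<Rightarrow> (nat \<Rightarrow> 'n mat) \<Rightarrow> (nat \<Rightarrow> real) \<Rightarrow> real \<Rightarrow> bool" where
  "approx_cubature k t \<sigma> n P \<omega> \<epsilon> \<longleftrightarrow>
     (\<forall>f\<in>Pol t. \<forall>m (Q :: nat \<Rightarrow> 'n mat) (c :: nat \<Rightarrow> real).
        (\<forall>i<m. Q i \<in> grass k) \<longrightarrow>
        (\<forall>R\<in>grass k. f R = (\<Sum>i<m. c i * Kt t (Q i) R)) \<longrightarrow>
        (\<Sum>i<m. \<Sum>j<m. c i * c j * Kt t (Q i) (Q j)) = 1 \<longrightarrow>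
        \<bar>(\<Sum>j<n. \<omega> j * f (P j)) - (\<integral>R. f R \<partial>\<sigma>)\<bar> \<le> \<epsilon>)"

end

theory Submission
  imports Defs
begin

definition phi :: "real \<Rightarrow> real" where "phi x = exp x - 1 - x"

lemma coshsqrt_sums:
  assumes "u \<ge> 0"
  shows "(\<lambda>n. if even n then u ^ (n div 2) / fact n else 0) sums cosh (sqrt u)"
proof -
  have "(\<lambda>n. if even n then sqrt u ^ n /\<^sub>R fact n else 0) sums cosh (sqrt u)"
    by (rule cosh_converges)
  moreover have "(\<lambda>n. if even n then sqrt u ^ n /\<^sub>R fact n else 0) = (\<lambda>n. if even n then u ^ (n div 2) / fact n else 0)"
  proof (rule ext)
    fix n :: nat
    show "(if even n then sqrt u ^ n /\<^sub>R fact n else 0) = (if even n then u ^ (n div 2) / fact n else 0)"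
    proof (cases "even n")
      case True
      then obtain m where "n = 2*m" by blast
      then have "sqrt u ^ n = u ^ (n div 2)" using assms by (simp add: power_mult)
      then show ?thesis using True by (simp add: divide_inverse mult.commute)
    qed simp
  qed
  ultimately show ?thesis by simp
qed

lemma coshsqrt_convex:
  assumes "a \<ge> 0" "b \<ge> 0" "0 \<le> th" "th \<le> 1"
  shows "cosh (sqrt (th * a + (1 - th) * b)) \<le> th * cosh (sqrt a) + (1 - th) * cosh (sqrt b)"
proof -
  define T where "T = (\<lambda>u n. if even n then u ^ (n div 2) / fact n else (0::real))"
  have ab: "th * a + (1 - th) * b \<ge> 0" using assms by simp
  have s1: "T (th * a + (1 - th) * b) sums cosh (sqrt (th * a + (1 - th) * b))"
    unfolding T_def by (rule coshsqrt_sums[OF ab])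
  have s2: "(\<lambda>n. th * T a n + (1 - th) * T b n) sums (th * cosh (sqrt a) + (1 - th) * cosh (sqrt b))"
    unfolding T_def by (intro sums_add sums_mult coshsqrt_sums assms)
  have pw: "(\<lambda>x. x ^ m) (th * a + (1 - th) * b) \<le> th * (\<lambda>x. x ^ m) a + (1 - th) * (\<lambda>x. x^m) b" for m :: nat
  proof -
    have c: "convex_on {0::real..} (\<lambda>x. x ^ m)"
      by (cases "even m") (auto intro: convex_on_subset[OF convex_power_even] convex_power_odd)
    show ?thesis
      using convex_onD[OF c, of "1 - th" a b] assms by (simp add: algebra_simps)
  qed
  have "T (th * a + (1 - th) * b) n \<le> th * T a n + (1 - th) * T b n" for n
    using pw[of "n div 2"] by (auto simp: T_def divide_right_mono add_divide_distrib[symmetric] intro!: divide_right_mono)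
  then show ?thesis using sums_le[OF _ s1 s2] by blast
qed

lemma sinh_ge_self:
  fixes y :: real assumes "y \<ge> 0" shows "sinh y \<ge> y"
proof -
  have "sinh 0 - 0 \<le> sinh y - y"
  proof (rule DERIV_nonneg_imp_nondecreasing[OF assms])
    fix x :: real
    show "\<exists>z. DERIV (\<lambda>x. sinh x - x) x :> z \<and> z \<ge> 0"
      by (intro exI[of _ "cosh x - 1"] conjI derivative_eq_intros) (auto simp: cosh_real_ge_1)
  qed
  then show ?thesis by simp
qed

lemma cosh_key:
  fixes r y c :: real
  assumes "r \<ge> 0" "y \<ge> 0" "\<bar>c\<bar> \<le> y"
  shows "cosh (sqrt (r\<^sup>2 + 2*r*c + y\<^sup>2)) \<le> cosh r + c * sinh r + cosh r * phi y"
proof (cases "y = 0")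
  case True
  then have "c = 0" using assms by simp
  then show ?thesis using True assms by (simp add: phi_def)
next
  case False
  then have y: "y > 0" using assms by simp
  define th where "th = (c + y) / (2*y)"
  have th0: "0 \<le> th" "th \<le> 1" using assms y by (auto simp: th_def field_simps)
  have u: "r\<^sup>2 + 2*r*c + y\<^sup>2 = th * (r+y)\<^sup>2 + (1 - th) * (r-y)\<^sup>2"
    using y by (simp add: th_def field_simps power2_eq_square) 
  have "cosh (sqrt (r\<^sup>2 + 2*r*c + y\<^sup>2)) \<le> th * cosh (sqrt ((r+y)\<^sup>2)) + (1-th) * cosh (sqrt ((r-y)\<^sup>2))"
    unfolding u by (rule coshsqrt_convex) (use th0 in auto)
  also have "\<dots> = th * cosh (r+y) + (1-th) * cosh (r-y)"
    by (simp add: real_sqrt_abs cosh_real_abs)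
  finally have A: "cosh (sqrt (r\<^sup>2 + 2*r*c + y\<^sup>2)) \<le> th * cosh (r+y) + (1-th) * cosh (r-y)" .
  have B: "cosh (r+y) \<le> cosh r + y * sinh r + cosh r * phi y"
  proof -
    have "sinh y \<ge> y" using sinh_ge_self[of y] y by simp 
    moreover have "sinh r \<le> cosh r" by (simp add: sinh_le_cosh_real)
    ultimately have "(cosh r - sinh r) * (sinh y - y) \<ge> 0" by simp
    moreover have "cosh r + y * sinh r + cosh r * phi y - cosh (r+y) = (cosh r - sinh r) * (sinh y - y)"
      by (simp add: cosh_add phi_def cosh_plus_sinh[symmetric] algebra_simps)
    ultimately show ?thesis by linarith
  qed
  have C: "cosh (r-y) \<le> cosh r - y * sinh r + cosh r * phi y"
  proof -
    have "sinh y \<ge> y" using sinh_ge_self[of y] y by simp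
    moreover have "sinh r \<ge> 0" using assms by simp
    moreover have "cosh r \<ge> 0" by simp
    ultimately have "(cosh r + sinh r) * (sinh y - y) \<ge> 0" by simp
    moreover have "cosh r - y * sinh r + cosh r * phi y - cosh (r-y) = (cosh r + sinh r) * (sinh y - y)"
      by (simp add: cosh_diff phi_def cosh_plus_sinh[symmetric] algebra_simps)
    ultimately show ?thesis by linarith
  qed
  have "th * cosh (r+y) + (1-th) * cosh (r-y) \<le> th * (cosh r + y * sinh r + cosh r * phi y) + (1-th) * (cosh r - y * sinh r + cosh r * phi y)"
    using B C th0 by (intro add_mono mult_left_mono) auto
  also have "\<dots> = cosh r + (2*th - 1) * y * sinh r + cosh r * phi y" by (simp add: algebra_simps)
  also have "(2*th - 1) * y = c" using y by (simp add: th_def field_simps)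
  finally show ?thesis using A by linarith
qed

lemma fact_ge_aux: "2 * 3 ^ i \<le> (fact (i+2) :: real)"
proof (induction i)
  case 0 then show ?case by simp
next
  case (Suc i)
  have "fact (Suc i + 2) = real (i + 3) * (fact (i+2) :: real)"
    by (simp add: fact_Suc algebra_simps)
  moreover have "real (i+3) \<ge> 3" by simp
  ultimately have "fact (Suc i + 2) \<ge> 3 * (fact (i+2) :: real)"
    by (metis mult_right_mono fact_ge_zero)
  moreover have "2 * 3 ^ Suc i = 3 * (2 * 3 ^ i :: real)" by simp
  ultimately show ?case using Suc by linarith
qed

lemma phi_bound:
  fixes x :: real assumes "0 \<le> x" "x < 3"
  shows "phi x \<le> x\<^sup>2 / (2 * (1 - x/3))"
proof -
  have e: "(\<lambda>n. x ^ n /\<^sub>R fact n) sums exp x" by (rule exp_converges)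
  have "(\<lambda>i. x ^ (i+2) /\<^sub>R fact (i+2)) sums (exp x - (\<Sum>i<2. x ^ i /\<^sub>R fact i))"
    using sums_iff_shift[of "\<lambda>n. x ^ n /\<^sub>R fact n" 2 "exp x - (\<Sum>i<2. x ^ i /\<^sub>R fact i)"] e by simp
  then have s1: "(\<lambda>i. x ^ (i+2) / fact (i+2)) sums phi x"
    by (simp add: phi_def eval_nat_numeral divide_inverse mult.commute diff_diff_eq)
  have g: "(\<lambda>i. (x/3) ^ i) sums (1 / (1 - x/3))"
    by (rule geometric_sums) (use assms in auto)
  have s2: "(\<lambda>i. x\<^sup>2 / 2 * (x/3) ^ i) sums (x\<^sup>2 / 2 * (1 / (1 - x/3)))"
    by (rule sums_mult[OF g])
  have "x ^ (i+2) / fact (i+2) \<le> x\<^sup>2 / 2 * (x/3) ^ i" for i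
  proof -
    have "x ^ (i+2) / fact (i+2) = x\<^sup>2 * x ^ i / fact (i+2)" by (simp add: power_add power2_eq_square mult.commute)
    also have "\<dots> \<le> x\<^sup>2 * x ^ i / (2 * 3 ^ i)"
      by (rule divide_left_mono[OF fact_ge_aux]) (use assms in auto)
    also have "\<dots> = x\<^sup>2 / 2 * (x/3) ^ i" by (simp add: power_divide)
    finally show ?thesis .
  qed
  then have "phi x \<le> x\<^sup>2 / 2 * (1 / (1 - x/3))" using sums_le[OF _ s1 s2] by blast
  then show ?thesis by simp
qed

lemma phi_mono:
  fixes x y :: real assumes "0 \<le> x" "x \<le> y" shows "phi x \<le> phi y"
proof -
  have "phi x \<le> phi y"
    unfolding phi_def
  proof (rule DERIV_nonneg_imp_nondecreasing[OF assms(2)])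
    fix z :: real assume "x \<le> z" "z \<le> y"
    then show "\<exists>d. DERIV (\<lambda>x. exp x - 1 - x) z :> d \<and> d \<ge> 0"
      using assms by (intro exI[of _ "exp z - 1"] conjI derivative_eq_intros) auto
  qed
  then show ?thesis .
qed

lemma phi_nonneg: "phi (x::real) \<ge> 0"
  unfolding phi_def using exp_ge_add_one_self[of x] by linarith

lemma bern_aux: "D > 0 \<Longrightarrow> N > 0 \<Longrightarrow> L > 0 \<Longrightarrow> N * ((u/D * L)\<^sup>2 / (2 * (N * L\<^sup>2 / D))) = u/D * u / 2"
  for D N L u :: real by (simp add: field_simps power2_eq_square)

lemma bernstein_calc:
  fixes N L u :: real
  assumes "N > 0" "L > 0" "u > 0"
  defines "th \<equiv> u / (N * L\<^sup>2 + L * u / 3)"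
  shows "N * phi (th * L) - th * u \<le> - (u\<^sup>2 / (2 * (N * L\<^sup>2 + L * u / 3)))"
proof -
  define D where "D = N * L\<^sup>2 + L * u / 3"
  have D: "D > 0" using assms by (simp add: D_def add_pos_pos)
  have th: "th = u / D" by (simp add: th_def D_def)
  have thL3: "th * L < 3"
  proof -
    have "th * L = L * u / D" by (simp add: th)
    also have "\<dots> < 3" using D assms by (simp add: D_def field_simps)
    finally show ?thesis .
  qed
  have thL0: "th * L \<ge> 0" using assms D by (simp add: th)
  have "N * phi (th * L) \<le> N * ((th * L)\<^sup>2 / (2 * (1 - th * L / 3)))"
    using mult_left_mono[OF phi_bound[OF thL0 thL3], of N] assms by simp
  also have "\<dots> = th * u / 2"
  proof -
    have e1: "1 - th * L / 3 = N * L\<^sup>2 / D" using D by (simp add: th D_def field_simps)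
    have "N * ((th * L)\<^sup>2 / (2 * (N * L\<^sup>2 / D))) = th * u / 2"
      using bern_aux[of D N L u] D assms unfolding th by simp
    then show ?thesis unfolding e1 .
  qed
  finally have "N * phi (th * L) - th * u \<le> - (th * u / 2)" by simp
  also have "th * u / 2 = u\<^sup>2 / (2 * D)" by (simp add: th power2_eq_square)
  finally show ?thesis by (simp add: D_def)
qed

lemma final_calc:
  fixes N a tau :: real
  assumes "N > 0" "0 < a" "a \<le> 1" "tau > 0"
  shows "(tau\<^sup>2 / 2) / (a + tau / (3 * sqrt N)) \<le> (a + tau\<^sup>2) / (2 * (a + sqrt a * sqrt (a + tau\<^sup>2) / (3 * sqrt N)))"
proof -
  define sN where "sN = sqrt N"
  define p where "p = sqrt a"
  define q where "q = sqrt (a + tau\<^sup>2)"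
  have s: "sN > 0" using assms by (simp add: sN_def)
  have p: "p > 0" "p\<^sup>2 = a" "p \<le> 1" using assms by (auto simp: p_def)
  have q: "q\<^sup>2 = a + tau\<^sup>2" "q \<ge> tau" "q > 0" using assms add_pos_nonneg[of a "tau\<^sup>2"]
    by (auto simp: q_def intro!: real_le_rsqrt)
  have tp: "tau * p \<le> q" using p q assms by (smt (verit) mult_left_le)
  have d1: "p\<^sup>2 + tau / (3 * sN) > 0" using p s assms by (auto intro!: add_pos_nonneg)
  have d2: "p\<^sup>2 + p * q / (3 * sN) > 0" using p q s by (auto intro!: add_pos_nonneg)
  have "tau\<^sup>2 * (p\<^sup>2 + p * q / (3 * sN)) \<le> q\<^sup>2 * (p\<^sup>2 + tau / (3 * sN))"
  proof -
    have "tau\<^sup>2 * p\<^sup>2 \<le> q\<^sup>2 * p\<^sup>2" using q assms by (intro mult_right_mono power_mono) auto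
    moreover have "tau\<^sup>2 * (p * q) \<le> q\<^sup>2 * tau"
    proof -
      have "tau\<^sup>2 * (p * q) = tau * q * (tau * p)" by (simp add: power2_eq_square)
      also have "\<dots> \<le> tau * q * q" using tp assms q by (intro mult_left_mono) auto
      finally show ?thesis by (simp add: power2_eq_square mult_ac)
    qed
    then have "tau\<^sup>2 * (p * q) / (3 * sN) \<le> q\<^sup>2 * tau / (3 * sN)" using s by (intro divide_right_mono) auto
    ultimately show ?thesis by (simp add: algebra_simps)
  qed
  then have "(tau\<^sup>2 / 2) / (p\<^sup>2 + tau / (3 * sN)) \<le> q\<^sup>2 / (2 * (p\<^sup>2 + p * q / (3 * sN)))"
    using d1 d2 by (simp add: field_simps)
  then show ?thesis using p q by (simp add: sN_def p_def q_def)
qed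

lemma vec_key:
  fixes s x :: "'c \<Rightarrow> real" and I :: "'c set" and th :: real
  assumes "finite I" "th \<ge> 0"
  defines "r \<equiv> L2_set s I"
  shows "cosh (th * L2_set (\<lambda>c. s c + x c) I) \<le> cosh (th * r)
          + (if r = 0 then 0 else th * sinh (th * r) / r) * (\<Sum>c\<in>I. s c * x c)
          + cosh (th * r) * phi (th * L2_set x I)"
proof -
  define y where "y = L2_set x I"
  define ip where "ip = (\<Sum>c\<in>I. s c * x c)"
  have r0: "r \<ge> 0" "y \<ge> 0" by (simp_all add: r_def y_def)
  have sq: "(L2_set (\<lambda>c. s c + x c) I)\<^sup>2 = r\<^sup>2 + 2 * ip + y\<^sup>2"
  proof -
    have "(L2_set (\<lambda>c. s c + x c) I)\<^sup>2 = (\<Sum>c\<in>I. (s c + x c)\<^sup>2)"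
      unfolding L2_set_def by (simp add: sum_nonneg)
    also have "\<dots> = (\<Sum>c\<in>I. (s c)\<^sup>2) + 2 * ip + (\<Sum>c\<in>I. (x c)\<^sup>2)"
      unfolding ip_def by (simp add: power2_sum sum.distrib sum_distrib_left mult.assoc)
    also have "(\<Sum>c\<in>I. (s c)\<^sup>2) = r\<^sup>2" unfolding r_def L2_set_def by (simp add: sum_nonneg)
    also have "(\<Sum>c\<in>I. (x c)\<^sup>2) = y\<^sup>2" unfolding y_def L2_set_def by (simp add: sum_nonneg)
    finally show ?thesis .
  qed
  have cs: "\<bar>ip\<bar> \<le> r * y"
  proof -
    have "\<bar>ip\<bar> \<le> (\<Sum>c\<in>I. \<bar>s c\<bar> * \<bar>x c\<bar>)" unfolding ip_def
      by (rule order_trans[OF sum_abs]) (simp add: abs_mult)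
    also have "\<dots> \<le> r * y" unfolding r_def y_def by (rule L2_set_mult_ineq)
    finally show ?thesis .
  qed
  have nrm: "L2_set (\<lambda>c. s c + x c) I = sqrt (r\<^sup>2 + 2 * ip + y\<^sup>2)"
    using sq by (metis L2_set_nonneg real_sqrt_abs abs_of_nonneg)
  show ?thesis
  proof (cases "r = 0")
    case True
    then have "ip = 0" using cs by simp
    then have "cosh (th * L2_set (\<lambda>c. s c + x c) I) = cosh (sqrt ((th*0)\<^sup>2 + 2*(th*0)*0 + (th*y)\<^sup>2))"
      using nrm True r0 assms by (simp add: real_sqrt_mult power_mult_distrib)
    also have "\<dots> \<le> cosh (th*0) + 0 * sinh (th*0) + cosh (th*0) * phi (th*y)"
      by (rule cosh_key) (use r0 assms in auto)
    finally show ?thesis using True by (simp add: y_def)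
  next
    case False
    then have rp: "r > 0" using r0 by simp
    define c where "c = ip / r"
    have "\<bar>c\<bar> \<le> y" using cs rp by (simp add: c_def abs_div divide_le_eq mult.commute)
    then have cy: "\<bar>th * c\<bar> \<le> th * y" using assms by (simp add: abs_mult mult_left_mono)
    have e: "(th*r)\<^sup>2 + 2*(th*r)*(th*c) + (th*y)\<^sup>2 = th\<^sup>2 * (r\<^sup>2 + 2 * ip + y\<^sup>2)"
      using rp by (simp add: c_def field_simps power2_eq_square)
    have "cosh (th * L2_set (\<lambda>c. s c + x c) I) = cosh (sqrt ((th*r)\<^sup>2 + 2*(th*r)*(th*c) + (th*y)\<^sup>2))"
      unfolding e nrm using assms by (simp add: real_sqrt_mult)
    also have "\<dots> \<le> cosh (th*r) + (th*c) * sinh (th*r) + cosh (th*r) * phi (th*y)"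
      by (rule cosh_key) (use r0 assms cy in auto)
    also have "(th*c) * sinh (th*r) = th * sinh (th * r) / r * ip" using rp by (simp add: c_def)
    finally show ?thesis using False by (simp add: y_def ip_def)
  qed
qed

lemma inner_step:
  fixes \<nu> :: "'a measure" and X :: "'a \<Rightarrow> 'c \<Rightarrow> real" and s :: "'c \<Rightarrow> real"
  assumes "prob_space \<nu>" "finite I" "th \<ge> 0" "L \<ge> 0"
    and int: "\<And>c. c \<in> I \<Longrightarrow> integrable \<nu> (\<lambda>y. X y c)"
    and bnd: "\<And>y. y \<in> space \<nu> \<Longrightarrow> L2_set (X y) I \<le> L"
    and mean: "\<And>c. c \<in> I \<Longrightarrow> (\<integral>y. X y c \<partial>\<nu>) = 0"
  shows "(\<integral>\<^sup>+y. ennreal (cosh (th * L2_set (\<lambda>c. s c + X y c) I)) \<partial>\<nu>)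
           \<le> ennreal (cosh (th * L2_set s I) * (1 + phi (th * L)))"
proof -
  interpret prob_space \<nu> by fact
  define r where "r = L2_set s I"
  define coef where "coef = (if r = 0 then 0 else th * sinh (th * r) / r)"
  define F where "F = (\<lambda>y. cosh (th * L2_set (\<lambda>c. s c + X y c) I))"
  define C where "C = cosh (th * r) * (1 + phi (th * L))"
  define G where "G = (\<lambda>y. C + coef * (\<Sum>c\<in>I. s c * X y c))"
  have measX: "(\<lambda>y. X y c) \<in> borel_measurable \<nu>" if "c \<in> I" for c
    using int[OF that] by (rule borel_measurable_integrable)
  have measF: "F \<in> borel_measurable \<nu>"
    unfolding F_def L2_set_def
    by (intro borel_measurable_continuous_on[where f=cosh] continuous_intros borel_measurable_sqrt[THEN measurable_compose_rev]
          borel_measurable_times borel_measurable_const borel_measurable_sum borel_measurable_power borel_measurable_add measX) auto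
  have intG: "integrable \<nu> G"
    unfolding G_def using int by (auto intro!: Bochner_Integration.integrable_add Bochner_Integration.integrable_sum integrable_mult_right)
  have FG: "F y \<le> G y" if "y \<in> space \<nu>" for y
  proof -
    have "F y \<le> cosh (th * r) + coef * (\<Sum>c\<in>I. s c * X y c) + cosh (th * r) * phi (th * L2_set (X y) I)"
      unfolding F_def r_def coef_def by (rule vec_key) (use assms in auto)
    also have "cosh (th * r) * phi (th * L2_set (X y) I) \<le> cosh (th * r) * phi (th * L)"
      using bnd[OF that] assms by (intro mult_left_mono phi_mono mult_left_mono) auto
    finally show ?thesis by (simp add: G_def C_def algebra_simps)
  qed
  have F0: "F y \<ge> 0" for y by (simp add: F_def)
  have intF: "integrable \<nu> F"
    by (rule Bochner_Integration.integrable_bound[OF intG measF]) (use FG F0 in \<open>auto intro!: AE_I2 order_trans[OF _ abs_ge_self]\<close>)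
  have eq: "(\<integral>\<^sup>+y. ennreal (F y) \<partial>\<nu>) = ennreal (\<integral>y. F y \<partial>\<nu>)"
    by (rule nn_integral_eq_integral[OF intF]) (simp add: F0)
  have "(\<integral>y. F y \<partial>\<nu>) \<le> (\<integral>y. G y \<partial>\<nu>)"
    by (rule Bochner_Integration.integral_mono[OF intF intG FG])
  also have "(\<integral>y. G y \<partial>\<nu>) = C"
  proof -
    have "(\<integral>y. G y \<partial>\<nu>) = C + coef * (\<Sum>c\<in>I. s c * (\<integral>y. X y c \<partial>\<nu>))"
      unfolding G_def using int by (simp add: integral_add integral_mult_right_zero integral_sum prob_space)
    also have "\<dots> = C" using mean by simp
    finally show ?thesis .
  qed
  finally have "(\<integral>y. F y \<partial>\<nu>) \<le> C" .
  then have "(\<integral>\<^sup>+y. ennreal (F y) \<partial>\<nu>) \<le> ennreal C" unfolding eq by (rule ennreal_leI)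
  then show ?thesis by (simp add: F_def C_def r_def)
qed

lemma meas_S:
  fixes \<nu> :: "'a measure" and X :: "'a \<Rightarrow> 'c \<Rightarrow> real"
  assumes measX: "\<And>c. c \<in> I \<Longrightarrow> (\<lambda>y. X y c) \<in> borel_measurable \<nu>"
    and J: "{..<m} \<subseteq> J"
  shows "(\<lambda>\<omega>. L2_set (\<lambda>c. \<Sum>j<m. X (\<omega> j) c) I) \<in> borel_measurable (PiM J (\<lambda>_. \<nu>))"
proof -
  have comp: "(\<lambda>\<omega>. X (\<omega> j) c) \<in> borel_measurable (PiM J (\<lambda>_. \<nu>))" if "c \<in> I" "j < m" for c j
    using measurable_compose[OF measurable_component_singleton[of j J "\<lambda>_. \<nu>"] measX[OF that(1)]] that J
    by auto
  show ?thesis unfolding L2_set_def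
    by (intro borel_measurable_sqrt[THEN measurable_compose_rev] borel_measurable_sum borel_measurable_power comp) auto
qed

lemma mgf_bound:
  fixes \<nu> :: "'a measure" and X :: "'a \<Rightarrow> 'c \<Rightarrow> real"
  assumes "prob_space \<nu>" "finite I" "th \<ge> 0" "L \<ge> 0"
    and int: "\<And>c. c \<in> I \<Longrightarrow> integrable \<nu> (\<lambda>y. X y c)"
    and bnd: "\<And>y. y \<in> space \<nu> \<Longrightarrow> L2_set (X y) I \<le> L"
    and mean: "\<And>c. c \<in> I \<Longrightarrow> (\<integral>y. X y c \<partial>\<nu>) = 0"
  shows "(\<integral>\<^sup>+\<omega>. ennreal (cosh (th * L2_set (\<lambda>c. \<Sum>j<n. X (\<omega> j) c) I)) \<partial>PiM {..<n} (\<lambda>_. \<nu>))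
           \<le> ennreal ((1 + phi (th * L)) ^ n)"
proof (induction n)
  case 0
  interpret p0: prob_space "PiM {} (\<lambda>_. \<nu>)" by (intro prob_space_PiM) auto
  show ?case by (simp add: L2_set_def p0.emeasure_space_1)
next
  case (Suc n)
  interpret prob_space \<nu> by fact
  interpret product_sigma_finite "\<lambda>_. \<nu>" by standard
  have measX: "(\<lambda>y. X y c) \<in> borel_measurable \<nu>" if "c \<in> I" for c
    using int[OF that] by (rule borel_measurable_integrable)
  define A where "A = 1 + phi (th * L)"
  have A0: "A \<ge> 0" using phi_nonneg by (simp add: A_def add_nonneg_nonneg)
  have mf: "(\<lambda>\<omega>. ennreal (cosh (th * L2_set (\<lambda>c. \<Sum>j<Suc n. X (\<omega> j) c) I))) \<in> borel_measurable (PiM (insert n {..<n}) (\<lambda>_. \<nu>))"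
  proof -
    have m1: "(\<lambda>\<omega>. L2_set (\<lambda>c. \<Sum>j<Suc n. X (\<omega> j) c) I) \<in> borel_measurable (PiM (insert n {..<n}) (\<lambda>_. \<nu>))"
      by (rule meas_S[OF measX]) auto
    have m2: "(\<lambda>x. ennreal (cosh (th * x))) \<in> borel_measurable borel"
      by (intro measurable_compose[OF _ measurable_ennreal] borel_measurable_continuous_onI continuous_intros)
    show ?thesis using measurable_compose[OF m1 m2] by simp
  qed
  have "(\<integral>\<^sup>+\<omega>. ennreal (cosh (th * L2_set (\<lambda>c. \<Sum>j<Suc n. X (\<omega> j) c) I)) \<partial>PiM {..<Suc n} (\<lambda>_. \<nu>))
      = (\<integral>\<^sup>+\<omega>. ennreal (cosh (th * L2_set (\<lambda>c. \<Sum>j<Suc n. X (\<omega> j) c) I)) \<partial>PiM (insert n {..<n}) (\<lambda>_. \<nu>))"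
    by (simp add: lessThan_Suc)
  also have "\<dots> = (\<integral>\<^sup>+x. (\<integral>\<^sup>+y. ennreal (cosh (th * L2_set (\<lambda>c. \<Sum>j<Suc n. X ((x(n:=y)) j) c) I)) \<partial>\<nu>) \<partial>PiM {..<n} (\<lambda>_. \<nu>))"
    by (rule product_nn_integral_insert[OF _ _ mf]) auto
  also have "\<dots> = (\<integral>\<^sup>+x. (\<integral>\<^sup>+y. ennreal (cosh (th * L2_set (\<lambda>c. (\<Sum>j<n. X (x j) c) + X y c) I)) \<partial>\<nu>) \<partial>PiM {..<n} (\<lambda>_. \<nu>))"
  proof -
    have "(\<Sum>j<Suc n. X ((x(n:=y)) j) c) = (\<Sum>j<n. X (x j) c) + X y c" for x y c
      by (simp add: sum.lessThan_Suc)
    then show ?thesis by simp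
  qed
  also have "\<dots> \<le> (\<integral>\<^sup>+x. ennreal (cosh (th * L2_set (\<lambda>c. \<Sum>j<n. X (x j) c) I) * A) \<partial>PiM {..<n} (\<lambda>_. \<nu>))"
    unfolding A_def
    by (intro nn_integral_mono inner_step[OF assms(1-4)] int bnd mean) auto
  also have "\<dots> = (\<integral>\<^sup>+x. ennreal (cosh (th * L2_set (\<lambda>c. \<Sum>j<n. X (x j) c) I)) \<partial>PiM {..<n} (\<lambda>_. \<nu>)) * ennreal A"
  proof -
    have m1: "(\<lambda>\<omega>. L2_set (\<lambda>c. \<Sum>j<n. X (\<omega> j) c) I) \<in> borel_measurable (PiM {..<n} (\<lambda>_. \<nu>))"
      by (rule meas_S[OF measX]) auto
    have m2: "(\<lambda>x. ennreal (cosh (th * x))) \<in> borel_measurable borel"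
      by (intro measurable_compose[OF _ measurable_ennreal] borel_measurable_continuous_onI continuous_intros)
    have "(\<integral>\<^sup>+x. ennreal (cosh (th * L2_set (\<lambda>c. \<Sum>j<n. X (x j) c) I) * A) \<partial>PiM {..<n} (\<lambda>_. \<nu>))
       = (\<integral>\<^sup>+x. ennreal (cosh (th * L2_set (\<lambda>c. \<Sum>j<n. X (x j) c) I)) * ennreal A \<partial>PiM {..<n} (\<lambda>_. \<nu>))"
      by (intro nn_integral_cong) (simp add: ennreal_mult A0)
    also have "\<dots> = (\<integral>\<^sup>+x. ennreal (cosh (th * L2_set (\<lambda>c. \<Sum>j<n. X (x j) c) I)) \<partial>PiM {..<n} (\<lambda>_. \<nu>)) * ennreal A"
      by (rule nn_integral_multc) (use measurable_compose[OF m1 m2] in simp)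
    finally show ?thesis .
  qed
  also have "\<dots> \<le> ennreal (A ^ n) * ennreal A"
    using Suc.IH unfolding A_def by (intro mult_right_mono) auto
  also have "\<dots> = ennreal (A ^ Suc n)"
    using A0 by (simp add: ennreal_mult'[symmetric] mult.commute)
  finally show ?case by (simp add: A_def)
qed

lemma tail_bound:
  fixes \<nu> :: "'a measure" and X :: "'a \<Rightarrow> 'c \<Rightarrow> real"
  assumes "prob_space \<nu>" "finite I" "L > 0" "u > 0" "n > 0"
    and int: "\<And>c. c \<in> I \<Longrightarrow> integrable \<nu> (\<lambda>y. X y c)"
    and bnd: "\<And>y. y \<in> space \<nu> \<Longrightarrow> L2_set (X y) I \<le> L"
    and mean: "\<And>c. c \<in> I \<Longrightarrow> (\<integral>y. X y c \<partial>\<nu>) = 0"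
  defines "M \<equiv> PiM {..<n} (\<lambda>_. \<nu>)"
  shows "{\<omega>\<in>space M. u \<le> L2_set (\<lambda>c. \<Sum>j<n. X (\<omega> j) c) I} \<in> sets M"
    and "measure M {\<omega>\<in>space M. u \<le> L2_set (\<lambda>c. \<Sum>j<n. X (\<omega> j) c) I}
           \<le> 2 * exp (- (u\<^sup>2 / (2 * (real n * L\<^sup>2 + L * u / 3))))"
proof -
  interpret pM: prob_space M unfolding M_def by (intro prob_space_PiM) (use assms in auto)
  have measX: "(\<lambda>y. X y c) \<in> borel_measurable \<nu>" if "c \<in> I" for c
    using int[OF that] by (rule borel_measurable_integrable)
  define f where "f = (\<lambda>\<omega>. L2_set (\<lambda>c. \<Sum>j<n. X (\<omega> j) c) I)"
  have mf[measurable]: "f \<in> borel_measurable M" unfolding f_def M_def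
    by (rule meas_S[OF measX]) auto
  define E where "E = {\<omega>\<in>space M. u \<le> f \<omega>}"
  have E: "E \<in> sets M" unfolding E_def by measurable
  then show "{\<omega>\<in>space M. u \<le> L2_set (\<lambda>c. \<Sum>j<n. X (\<omega> j) c) I} \<in> sets M"
    by (simp add: E_def f_def)
  define th where "th = u / (real n * L\<^sup>2 + L * u / 3)"
  have th0: "th \<ge> 0" using assms by (simp add: th_def)
  define A where "A = 1 + phi (th * L)"
  have "ennreal (cosh (th * u)) * emeasure M E = (\<integral>\<^sup>+\<omega>. ennreal (cosh (th * u)) * indicator E \<omega> \<partial>M)"
    using E by (simp add: nn_integral_cmult_indicator)
  also have "\<dots> \<le> (\<integral>\<^sup>+\<omega>. ennreal (cosh (th * f \<omega>)) \<partial>M)"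
  proof (intro nn_integral_mono)
    fix \<omega> assume "\<omega> \<in> space M"
    show "ennreal (cosh (th * u)) * indicator E \<omega> \<le> ennreal (cosh (th * f \<omega>))"
    proof (cases "\<omega> \<in> E")
      case True
      then have "u \<le> f \<omega>" by (simp add: E_def)
      then have "cosh (th * u) \<le> cosh (th * f \<omega>)" using th0 assms
        by (subst cosh_real_nonneg_le_iff) (auto intro: mult_left_mono)
      then show ?thesis using True by (simp add: ennreal_leI)
    qed simp
  qed
  also have "\<dots> \<le> ennreal (A ^ n)"
    unfolding f_def M_def A_def by (rule mgf_bound) (use assms th0 in auto)
  finally have *: "ennreal (cosh (th * u)) * emeasure M E \<le> ennreal (A ^ n)" .
  have c0: "cosh (th * u) > 0" by simp
  have "measure M E \<le> A ^ n / cosh (th * u)"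
  proof -
    have "ennreal (cosh (th * u) * measure M E) \<le> ennreal (A ^ n)"
      using * by (simp add: pM.emeasure_eq_measure ennreal_mult)
    then have "cosh (th * u) * measure M E \<le> A ^ n"
      by (subst (asm) ennreal_le_iff) (auto simp: A_def phi_nonneg add_nonneg_nonneg)
    then show ?thesis using c0 by (simp add: field_simps)
  qed
  also have "A ^ n / cosh (th * u) \<le> exp (real n * phi (th * L)) / (exp (th * u) / 2)"
  proof (rule frac_le)
    have "A \<le> exp (phi (th * L))" unfolding A_def by (rule exp_ge_add_one_self)
    then have "A ^ n \<le> exp (phi (th * L)) ^ n"
      by (rule power_mono) (simp add: A_def phi_nonneg add_nonneg_nonneg)
    then show "A ^ n \<le> exp (real n * phi (th * L))" by (simp add: exp_of_nat_mult)
    show "exp (th * u) / 2 \<le> cosh (th * u)" by (simp add: cosh_def)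
  qed (auto simp: A_def phi_nonneg add_nonneg_nonneg)
  also have "\<dots> = 2 * exp (real n * phi (th * L) - th * u)" by (simp add: exp_diff)
  also have "\<dots> \<le> 2 * exp (- (u\<^sup>2 / (2 * (real n * L\<^sup>2 + L * u / 3))))"
    using bernstein_calc[of "real n" L u] assms unfolding th_def by simp
  finally show "measure M {\<omega>\<in>space M. u \<le> L2_set (\<lambda>c. \<Sum>j<n. X (\<omega> j) c) I}
           \<le> 2 * exp (- (u\<^sup>2 / (2 * (real n * L\<^sup>2 + L * u / 3))))" by (simp add: E_def f_def)
qed

lemma orthonormal_expand:
  fixes B :: "'a::euclidean_space set"
  assumes "pairwise orthogonal B" "\<And>b. b \<in> B \<Longrightarrow> norm b = 1" "y \<in> span B"
  shows "y = (\<Sum>b\<in>B. (b \<bullet> y) *\<^sub>R b)"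
proof -
  define z where "z = y - (\<Sum>b\<in>B. (b \<bullet> y / (b \<bullet> b)) *\<^sub>R b)"
  have "(\<Sum>b\<in>B. (b \<bullet> y / (b \<bullet> b)) *\<^sub>R b) \<in> span B"
    by (intro span_sum span_scale span_base)
  then have "z \<in> span B" unfolding z_def using assms(3) by (intro span_diff)
  then have "orthogonal z z" unfolding z_def by (rule Gram_Schmidt_step[OF assms(1)])
  then have "z = 0" by (simp add: orthogonal_def)
  moreover have "b \<bullet> b = 1" if "b \<in> B" for b using assms(2)[OF that] by (simp add: norm_eq_1)
  ultimately show ?thesis by (simp add: z_def)
qed

lemma proj_dim:
  fixes P :: "real^'n^'n"
  assumes sym: "transpose P = P" and idem: "P ** P = P"
  shows "real (dim (range (\<lambda>x. P *v x))) = trace P"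
proof -
  define V where "V = range (\<lambda>x. P *v x)"
  have sV: "subspace V" unfolding V_def
    by (rule linear_subspace_image[OF matrix_vector_mul_linear subspace_UNIV])
  obtain B where B: "B \<subseteq> V" "pairwise orthogonal B" "\<And>x. x \<in> B \<Longrightarrow> norm x = 1"
    "independent B" "card B = dim V" "span B = V"
    by (rule orthonormal_basis_subspace[OF sV]) blast
  have finB: "finite B" using B(4) by (rule independent_imp_finite)
  have Pb: "P *v b = b" if bB: "b \<in> B" for b
  proof -
    obtain y where "b = P *v y" using subsetD[OF B(1) bB] unfolding V_def by auto
    then show ?thesis by (simp add: matrix_vector_mul_assoc idem)
  qed
  have exp: "P *v x = (\<Sum>b\<in>B. (b \<bullet> x) *\<^sub>R b)" for x
  proof -
    have "P *v x \<in> span B" using B(6) unfolding V_def by auto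
    then have "P *v x = (\<Sum>b\<in>B. (b \<bullet> (P *v x)) *\<^sub>R b)" using B(2,3) by (intro orthonormal_expand) auto
    also have "\<dots> = (\<Sum>b\<in>B. (b \<bullet> x) *\<^sub>R b)"
    proof (rule sum.cong[OF refl])
      fix b assume b: "b \<in> B"
      have "b \<bullet> (P *v x) = (b v* P) \<bullet> x" by (simp add: dot_lmul_matrix)
      also have "b v* P = b" using Pb[OF b] sym by (metis transpose_matrix_vector)
      finally show "(b \<bullet> (P *v x)) *\<^sub>R b = (b \<bullet> x) *\<^sub>R b" by simp
    qed
    finally show ?thesis .
  qed
  have "trace P = (\<Sum>i\<in>UNIV. (P *v axis i 1) $ i)"
    unfolding trace_def by (simp add: matrix_vector_mul_component inner_axis)
  also have "\<dots> = (\<Sum>i\<in>UNIV. \<Sum>b\<in>B. (b $ i) * (b $ i))"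
    by (simp add: exp inner_axis)
  also have "\<dots> = (\<Sum>b\<in>B. b \<bullet> b)"
    by (subst sum.swap) (simp add: inner_vec_def)
  also have "\<dots> = real (card B)"
    using B(3) by (simp add: norm_eq_1)
  finally show ?thesis using B(5) by (simp add: V_def)
qed

lemma compl_proj:
  fixes P :: "real^'n^'n"
  assumes sym: "transpose P = P" and idem: "P ** P = P"
  shows "transpose (mat 1 - P) = mat 1 - P" "(mat 1 - P) ** (mat 1 - P) = mat 1 - P"
    "(mat 1 - P) *v x = x - P *v x"
proof -
  show "transpose (mat 1 - P) = mat 1 - P"
    using sym by (simp add: transpose_def mat_def vec_eq_iff)
  show qx: "(mat 1 - P) *v x = x - P *v x" for x
    by (simp add: matrix_vector_mult_diff_rdistrib)
  show "(mat 1 - P) ** (mat 1 - P) = mat 1 - P"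
    unfolding matrix_eq
  proof
    fix x
    have "((mat 1 - P) ** (mat 1 - P)) *v x = (mat 1 - P) *v ((mat 1 - P) *v x)"
      by (simp add: matrix_vector_mul_assoc)
    also have "\<dots> = (x - P *v x) - P *v (x - P *v x)" by (simp add: qx)
    also have "P *v (x - P *v x) = 0"
      by (simp add: matrix_vector_mult_diff_distrib matrix_vector_mul_assoc idem)
    also have "(x - P *v x) - 0 = x - P *v x" by simp
    finally show "((mat 1 - P) ** (mat 1 - P)) *v x = (mat 1 - P) *v x" by (simp add: qx)
  qed
qed

lemma proj_orth:
  fixes P :: "real^'n^'n"
  assumes sym: "transpose P = P" and idem: "P ** P = P"
  shows "(P *v z) \<bullet> (w - P *v w) = 0"
proof -
  have "(P *v z) \<bullet> (w - P *v w) = z \<bullet> (P *v (w - P *v w))"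
    by (metis dot_lmul_matrix sym transpose_matrix_vector inner_commute)
  also have "P *v (w - P *v w) = 0"
    by (simp add: matrix_vector_mult_diff_distrib matrix_vector_mul_assoc idem)
  finally show ?thesis by simp
qed

lemma grass_trans:
  fixes P P' :: "real^'n^'n"
  assumes "P \<in> grass k" "P' \<in> grass k"
  shows "\<exists>U. orthogonal_matrix U \<and> U ** P ** transpose U = P'"
proof -
  have P: "transpose P = P" "P ** P = P" "trace P = real k" using assms(1) by (auto simp: grass_def)
  have P': "transpose P' = P'" "P' ** P' = P'" "trace P' = real k" using assms(2) by (auto simp: grass_def)
  define V where "V = range (\<lambda>x. P *v x)"
  define V' where "V' = range (\<lambda>x. P' *v x)"
  define W where "W = range (\<lambda>x. (mat 1 - P) *v x)"
  define W' where "W' = range (\<lambda>x. (mat 1 - P') *v x)"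
  have sub: "subspace V" "subspace V'" "subspace W" "subspace W'"
    unfolding V_def V'_def W_def W'_def
    by (rule linear_subspace_image[OF matrix_vector_mul_linear subspace_UNIV])+
  have "real (dim V) = real (dim V')"
    unfolding V_def V'_def using proj_dim[OF P(1,2)] proj_dim[OF P'(1,2)] P(3) P'(3) by simp
  then have dV: "dim V = dim V'" by simp
  have "real (dim W) = real (dim W')"
    unfolding W_def W'_def using proj_dim[OF compl_proj(1,2)[OF P(1,2)]] proj_dim[OF compl_proj(1,2)[OF P'(1,2)]] P(3) P'(3)
    by (simp add: trace_sub trace_I)
  then have dW: "dim W = dim W'" by simp
  obtain f1 where f1: "linear f1" "f1 ` V = V'" "\<And>x. x \<in> V \<Longrightarrow> norm (f1 x) = norm x"
    by (rule isometry_subspaces[OF sub(1,2) dV]) blast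
  obtain f2 where f2: "linear f2" "f2 ` W = W'" "\<And>x. x \<in> W \<Longrightarrow> norm (f2 x) = norm x"
    by (rule isometry_subspaces[OF sub(3,4) dW]) blast
  have Wx: "(mat 1 - P) *v x = x - P *v x" for x by (rule compl_proj(3)[OF P(1,2)])
  have W'x: "(mat 1 - P') *v x = x - P' *v x" for x by (rule compl_proj(3)[OF P'(1,2)])
  define f where "f = (\<lambda>x. f1 (P *v x) + f2 (x - P *v x))"
  have lin: "linear f" unfolding f_def
    by (intro linear_compose_add linear_compose[OF matrix_vector_mul_linear f1(1), unfolded o_def]
          linear_compose[OF _ f2(1), unfolded o_def] linear_compose_sub linear_id[unfolded id_def] matrix_vector_mul_linear)
  have inV: "P *v x \<in> V" for x unfolding V_def by auto
  have inW: "x - P *v x \<in> W" for x unfolding W_def Wx by auto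
  have f1V': "\<exists>z. f1 (P *v x) = P' *v z" for x using f1(2) inV[of x] unfolding V'_def by blast
  have f2W': "\<exists>w. f2 (x - P *v x) = w - P' *v w" for x using f2(2) inW[of x] unfolding W'_def W'x by blast
  have nrm: "norm (f x) = norm x" for x
  proof -
    obtain z where z: "f1 (P *v x) = P' *v z" using f1V' by blast
    obtain w where w: "f2 (x - P *v x) = w - P' *v w" using f2W' by blast
    have "(norm (f x))\<^sup>2 = (norm (f1 (P *v x)))\<^sup>2 + (norm (f2 (x - P *v x)))\<^sup>2"
      unfolding f_def z w by (rule norm_add_Pythagorean) (simp add: orthogonal_def proj_orth[OF P'(1,2)])
    also have "\<dots> = (norm (P *v x))\<^sup>2 + (norm (x - P *v x))\<^sup>2"
      using f1(3)[OF inV] f2(3)[OF inW] by simp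
    also have "\<dots> = (norm (P *v x + (x - P *v x)))\<^sup>2"
      by (rule norm_add_Pythagorean[symmetric]) (simp add: orthogonal_def proj_orth[OF P(1,2)])
    finally show ?thesis by simp
  qed
  have ot: "orthogonal_transformation f" using lin nrm by (simp add: orthogonal_transformation)
  define U where "U = matrix f"
  have Ux: "U *v x = f x" for x unfolding U_def using matrix_vector_mul(2)[OF lin] by metis
  have oU: "orthogonal_matrix U" using ot unfolding U_def by (simp add: orthogonal_transformation_matrix)
  have UP: "U ** P = P' ** U"
    unfolding matrix_eq
  proof
    fix x
    obtain z where z: "f1 (P *v x) = P' *v z" using f1V' by blast
    obtain w where w: "f2 (x - P *v x) = w - P' *v w" using f2W' by blast
    have "(U ** P) *v x = f (P *v x)" by (simp add: Ux matrix_vector_mul_assoc[symmetric])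
    also have "\<dots> = f1 (P *v x)"
      unfolding f_def using P(2) linear_0[OF f2(1)] by (simp add: matrix_vector_mul_assoc)
    also have "\<dots> = P' *v (f1 (P *v x) + f2 (x - P *v x))"
      unfolding z w using P'(2)
      by (simp add: matrix_vector_right_distrib matrix_vector_mult_diff_distrib matrix_vector_mul_assoc)
    also have "\<dots> = (P' ** U) *v x" by (simp add: Ux f_def matrix_vector_mul_assoc[symmetric])
    finally show "(U ** P) *v x = (P' ** U) *v x" .
  qed
  have "U ** P ** transpose U = P' ** (U ** transpose U)" by (simp add: UP matrix_mul_assoc)
  also have "U ** transpose U = mat 1" using oU by (simp add: orthogonal_matrix_def)
  finally show ?thesis using oU by auto
qed

lemma conj_grass:
  fixes U P :: "real^'n^'n"
  assumes "orthogonal_matrix U" "P \<in> grass k"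
  shows "U ** P ** transpose U \<in> grass k"
proof -
  have P: "transpose P = P" "P ** P = P" "trace P = real k" using assms(2) by (auto simp: grass_def)
  have UU: "transpose U ** U = mat 1" using assms(1) by (simp add: orthogonal_matrix_def)
  have "transpose (U ** P ** transpose U) = U ** P ** transpose U"
    by (simp add: matrix_transpose_mul P(1) matrix_mul_assoc)
  moreover have "(U ** P ** transpose U) ** (U ** P ** transpose U) = U ** P ** transpose U"
  proof -
    have "(U ** P ** transpose U) ** (U ** P ** transpose U) = U ** P ** (transpose U ** U) ** P ** transpose U"
      by (simp add: matrix_mul_assoc)
    also have "\<dots> = U ** (P ** P) ** transpose U" by (simp add: UU matrix_mul_assoc)
    finally show ?thesis by (simp add: P(2))
  qed
  moreover have "trace (U ** P ** transpose U) = real k"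
  proof -
    have "trace (U ** P ** transpose U) = trace (U ** (P ** transpose U))" by (simp add: matrix_mul_assoc)
    also have "\<dots> = trace ((P ** transpose U) ** U)" by (rule trace_mul_sym)
    also have "\<dots> = trace P" by (simp add: UU matrix_mul_assoc[symmetric])
    finally show ?thesis using P(3) by simp
  qed
  ultimately show ?thesis by (simp add: grass_def)
qed

lemma cont_conj: "continuous_on UNIV (\<lambda>Q::real^'n^'n. A ** Q ** B)"
  unfolding matrix_matrix_mult_def
  by (intro continuous_on_vec_lambda continuous_on_sum continuous_on_mult continuous_on_const continuous_on_component continuous_on_id)

lemma cont_inner: "continuous_on UNIV (\<lambda>Q::real^'n^'n. mat_inner P Q)"
  unfolding mat_inner_def matrix_matrix_mult_def trace_def
  by (intro continuous_on_vec_lambda continuous_on_sum continuous_on_mult continuous_on_const continuous_on_component continuous_on_id)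

lemma space_sigma:
  assumes "sets \<sigma> = sets (restrict_space borel (grass k :: ('n::finite) mat set))"
  shows "space \<sigma> = grass k"
  using sets_eq_imp_space_eq[OF assms] by (simp add: space_restrict_space)

lemma Kt_conj:
  fixes U P Q :: "real^'n^'n"
  shows "Kt t (U ** P ** transpose U) Q = Kt t P (transpose U ** Q ** U)"
proof -
  have "trace (U ** P ** transpose U ** Q) = trace (U ** (P ** transpose U ** Q))" by (simp add: matrix_mul_assoc)
  also have "\<dots> = trace ((P ** transpose U ** Q) ** U)" by (rule trace_mul_sym)
  also have "\<dots> = trace (P ** (transpose U ** Q ** U))" by (simp add: matrix_mul_assoc)
  finally show ?thesis by (simp add: Kt_def mat_inner_def)
qed

lemma g_invariant:
  fixes \<sigma> :: "'n::finite mat measure" and U P :: "real^'n^'n"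
  assumes \<sigma>: "orth_inv_prob k \<sigma>" and U: "orthogonal_matrix U"
  shows "(\<integral>Q. Kt t (U ** P ** transpose U) Q \<partial>\<sigma>) = (\<integral>Q. Kt t P Q \<partial>\<sigma>)"
proof -
  have sets: "sets \<sigma> = sets (restrict_space borel (grass k))" using \<sigma> unfolding orth_inv_prob_def by blast
  have inv: "\<And>A. A \<in> sets \<sigma> \<Longrightarrow> emeasure \<sigma> ((\<lambda>P. U ** P ** transpose U) ` A) = emeasure \<sigma> A"
    using \<sigma> U unfolding orth_inv_prob_def by blast
  have sp: "space \<sigma> = grass k" by (rule space_sigma[OF sets])
  have UU: "transpose U ** U = mat 1" "U ** transpose U = mat 1" using U by (simp_all add: orthogonal_matrix_def)
  have Ut: "orthogonal_matrix (transpose U)" unfolding orthogonal_matrix_def transpose_transpose using UU by blast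
  define h where "h = (\<lambda>Q::real^'n^'n. transpose U ** Q ** U)"
  define h' where "h' = (\<lambda>Q::real^'n^'n. U ** Q ** transpose U)"
  have hh': "h (h' Q) = Q" "h' (h Q) = Q" for Q
  proof -
    have "h (h' Q) = (transpose U ** U) ** Q ** (transpose U ** U)" unfolding h_def h'_def by (simp only: matrix_mul_assoc)
    then show "h (h' Q) = Q" by (simp add: UU)
    have "h' (h Q) = (U ** transpose U) ** Q ** (U ** transpose U)" unfolding h_def h'_def by (simp only: matrix_mul_assoc)
    then show "h' (h Q) = Q" by (simp add: UU)
  qed
  have hg: "h Q \<in> grass k" if "Q \<in> grass k" for Q
    using conj_grass[OF Ut that] by (simp add: h_def)
  have h'g: "h' Q \<in> grass k" if "Q \<in> grass k" for Q
    using conj_grass[OF U that] by (simp add: h'_def)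
  have hm: "h \<in> measurable \<sigma> \<sigma>"
  proof -
    have "h \<in> measurable (restrict_space borel (grass k)) (restrict_space borel (grass k))"
    proof (rule measurable_restrict_space3)
      show "h \<in> borel_measurable borel" unfolding h_def by (rule borel_measurable_continuous_onI[OF cont_conj])
      show "h \<in> grass k \<rightarrow> grass k" using hg by blast
    qed
    then show ?thesis using measurable_cong_sets[OF sets sets] by blast
  qed
  have D: "distr \<sigma> \<sigma> h = \<sigma>"
  proof (rule measure_eqI)
    show "sets (distr \<sigma> \<sigma> h) = sets \<sigma>" by simp
    fix A assume "A \<in> sets (distr \<sigma> \<sigma> h)"
    then have A: "A \<in> sets \<sigma>" by simp
    then have Asub: "A \<subseteq> grass k" using sets.sets_into_space sp by blast
    have "h -` A \<inter> space \<sigma> = h' ` A"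
    proof (rule set_eqI)
      fix Q
      show "Q \<in> h -` A \<inter> space \<sigma> \<longleftrightarrow> Q \<in> h' ` A"
      proof
        assume "Q \<in> h -` A \<inter> space \<sigma>"
        then have "h Q \<in> A" by simp
        then show "Q \<in> h' ` A" by (metis hh'(2) image_eqI)
      next
        assume "Q \<in> h' ` A"
        then obtain R where R: "R \<in> A" "Q = h' R" by blast
        then have "h Q \<in> A" by (simp add: hh')
        moreover have "Q \<in> space \<sigma>" using R Asub h'g sp by auto
        ultimately show "Q \<in> h -` A \<inter> space \<sigma>" by simp
      qed
    qed
    then show "emeasure (distr \<sigma> \<sigma> h) A = emeasure \<sigma> A"
      using inv[OF A] by (simp add: emeasure_distr[OF hm A] h'_def)
  qed
  have fm: "(\<lambda>Q. Kt t P Q) \<in> borel_measurable \<sigma>"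
  proof -
    have "(\<lambda>Q. Kt t P Q) \<in> borel_measurable borel"
      unfolding Kt_def by (intro borel_measurable_continuous_onI continuous_on_power cont_inner)
    then have "(\<lambda>Q. Kt t P Q) \<in> borel_measurable (restrict_space borel (grass k))" by (rule measurable_restrict_space1)
    then show ?thesis using measurable_cong_sets[OF sets refl] by blast
  qed
  have "(\<integral>Q. Kt t P Q \<partial>\<sigma>) = (\<integral>Q. Kt t P Q \<partial>(distr \<sigma> \<sigma> h))" by (simp add: D)
  also have "\<dots> = (\<integral>Q. Kt t P (h Q) \<partial>\<sigma>)" by (rule integral_distr[OF hm fm])
  finally show ?thesis by (simp add: Kt_conj h_def)
qed

lemma g_const:
  fixes \<sigma> :: "'n::finite mat measure"
  assumes \<sigma>: "orth_inv_prob k \<sigma>" and "P \<in> grass k" "P' \<in> grass k"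
  shows "(\<integral>Q. Kt t P' Q \<partial>\<sigma>) = (\<integral>Q. Kt t P Q \<partial>\<sigma>)"
proof -
  obtain U where "orthogonal_matrix U" "U ** P ** transpose U = P'" using grass_trans[OF assms(2,3)] by blast
  then show ?thesis using g_invariant[OF \<sigma>, where U=U and P=P and t=t] by simp
qed

definition feat_idx :: "nat \<Rightarrow> (nat \<Rightarrow> ('n::finite \<times> 'n)) set" where
  "feat_idx t = PiE {..<t} (\<lambda>_. UNIV)"

definition ph :: "nat \<Rightarrow> 'n::finite mat \<Rightarrow> (nat \<Rightarrow> 'n \<times> 'n) \<Rightarrow> real" where
  "ph t P e = (\<Prod>l<t. P $ fst (e l) $ snd (e l))"

lemma finite_feat_idx: "finite (feat_idx t :: (nat \<Rightarrow> ('n::finite \<times> 'n)) set)"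
  unfolding feat_idx_def by (intro finite_PiE) auto

lemma mat_inner_sym:
  fixes Q R :: "'n::finite mat"
  assumes "transpose R = R"
  shows "mat_inner Q R = (\<Sum>p\<in>UNIV. Q $ fst p $ snd p * R $ fst p $ snd p)"
proof -
  have R: "R $ j $ i = R $ i $ j" for i j
    using arg_cong[OF assms, of "\<lambda>A. A $ i $ j"] by (simp add: transpose_def)
  have "mat_inner Q R = (\<Sum>i\<in>UNIV. \<Sum>j\<in>UNIV. Q $ i $ j * R $ j $ i)"
    by (simp add: mat_inner_def trace_def matrix_matrix_mult_def)
  also have "\<dots> = (\<Sum>i\<in>UNIV. \<Sum>j\<in>UNIV. Q $ i $ j * R $ i $ j)" by (simp add: R)
  also have "\<dots> = (\<Sum>p\<in>UNIV. Q $ fst p $ snd p * R $ fst p $ snd p)"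
    by (subst sum.cartesian_product) (simp add: case_prod_beta)
  finally show ?thesis .
qed

lemma Kt_feat:
  fixes Q R :: "'n::finite mat"
  assumes "transpose R = R"
  shows "Kt t Q R = (\<Sum>e\<in>feat_idx t. ph t Q e * ph t R e)"
proof -
  define f where "f = (\<lambda>p::'n \<times> 'n. Q $ fst p $ snd p * R $ fst p $ snd p)"
  have "Kt t Q R = (\<Sum>p\<in>UNIV. f p) ^ t" by (simp add: Kt_def mat_inner_sym[OF assms] f_def)
  also have "\<dots> = (\<Prod>l\<in>{..<t}. \<Sum>p\<in>UNIV. f p)" by simp
  also have "\<dots> = (\<Sum>e\<in>PiE {..<t} (\<lambda>_. UNIV). \<Prod>l\<in>{..<t}. f (e l))"
    by (rule prod_sum_PiE) auto
  also have "\<dots> = (\<Sum>e\<in>feat_idx t. ph t Q e * ph t R e)"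
    unfolding feat_idx_def ph_def f_def by (simp add: prod.distrib)
  finally show ?thesis .
qed

lemma fiber_prod:
  fixes g :: "'b::finite \<Rightarrow> real" and e :: "'a \<Rightarrow> 'b"
  assumes "finite S"
  shows "(\<Prod>l\<in>S. g (e l)) = (\<Prod>p\<in>UNIV. g p ^ card {l\<in>S. e l = p})"
proof -
  have "(\<Prod>l\<in>S. g (e l)) = (\<Prod>y\<in>e ` S. \<Prod>l\<in>{l. l \<in> S \<and> e l = y}. g (e l))"
    by (rule prod.image_gen[OF assms])
  also have "\<dots> = (\<Prod>y\<in>e ` S. g y ^ card {l\<in>S. e l = y})"
  proof (rule prod.cong[OF refl])
    fix y
    have "(\<Prod>l\<in>{l. l \<in> S \<and> e l = y}. g (e l)) = (\<Prod>l\<in>{l. l \<in> S \<and> e l = y}. g y)"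
      by (rule prod.cong) auto
    then show "(\<Prod>l\<in>{l. l \<in> S \<and> e l = y}. g (e l)) = g y ^ card {l\<in>S. e l = y}" by simp
  qed
  also have "\<dots> = (\<Prod>p\<in>UNIV. g p ^ card {l\<in>S. e l = p})"
  proof (rule prod.mono_neutral_left)
    show "\<forall>i\<in>UNIV - e ` S. g i ^ card {l \<in> S. e l = i} = 1"
    proof
      fix i assume "i \<in> UNIV - e ` S"
      then have "{l \<in> S. e l = i} = {}" by auto
      then show "g i ^ card {l \<in> S. e l = i} = 1" by (metis card.empty power_0)
    qed
  qed auto
  finally show ?thesis .
qed

lemma fiber_sum:
  fixes e :: "'a \<Rightarrow> 'b::finite"
  assumes "finite S"
  shows "(\<Sum>p\<in>UNIV. card {l\<in>S. e l = p}) = card S"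
proof -
  have "card S = (\<Sum>l\<in>S. 1)" by simp
  also have "\<dots> = (\<Sum>y\<in>e ` S. \<Sum>l\<in>{l. l \<in> S \<and> e l = y}. 1)"
    by (rule sum.image_gen[OF assms])
  also have "\<dots> = (\<Sum>y\<in>e ` S. card {l\<in>S. e l = y})" by simp
  also have "\<dots> = (\<Sum>p\<in>UNIV. card {l\<in>S. e l = p})"
  proof (rule sum.mono_neutral_left)
    show "\<forall>i\<in>UNIV - e ` S. card {l \<in> S. e l = i} = 0"
    proof
      fix i assume "i \<in> UNIV - e ` S"
      then have "{l \<in> S. e l = i} = {}" by auto
      then show "card {l \<in> S. e l = i} = 0" by (metis card.empty)
    qed
  qed auto
  finally show ?thesis by simp
qed

lemma ph_Pol: "(\<lambda>P. ph t P e) \<in> (Pol t :: ('n::finite mat \<Rightarrow> real) set)"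
proof -
  define \<alpha> where "\<alpha> = (\<lambda>p::'n \<times> 'n. card {l\<in>{..<t}. e l = p})"
  have "(\<lambda>P. ph t P e) = (\<lambda>P::'n mat. \<Sum>\<beta>\<in>{\<alpha>}. 1 * monomial \<beta> P)"
  proof
    fix P :: "'n mat"
    show "ph t P e = (\<Sum>\<beta>\<in>{\<alpha>}. 1 * monomial \<beta> P)"
      unfolding ph_def monomial_def \<alpha>_def
      using fiber_prod[of "{..<t}" "\<lambda>p. P $ fst p $ snd p" e] by simp
  qed
  moreover have "(\<Sum>ij\<in>UNIV. \<alpha> ij) \<le> t" unfolding \<alpha>_def using fiber_sum[of "{..<t}" e] by simp
  ultimately have "finite {\<alpha>} \<and> (\<forall>\<beta>\<in>{\<alpha>}. (\<Sum>ij\<in>UNIV. \<beta> ij) \<le> t) \<and> (\<lambda>P. ph t P e) = (\<lambda>P::'n mat. \<Sum>\<beta>\<in>{\<alpha>}. (\<lambda>_. 1) \<beta> * monomial \<beta> P)"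
    by simp
  then show ?thesis unfolding Pol_def by (intro CollectI exI)
qed

lemma grass_entry:
  fixes P :: "'n::finite mat"
  assumes "P \<in> grass k"
  shows "\<bar>P $ i $ j\<bar> \<le> 1"
proof -
  have sym: "P $ a $ b = P $ b $ a" for a b
  proof -
    have "transpose P = P" using assms by (simp add: grass_def)
    from arg_cong[OF this, of "\<lambda>A. A $ b $ a"] show ?thesis by (simp add: transpose_def)
  qed
  have idem: "P ** P = P" using assms by (simp add: grass_def)
  have dii: "P $ i $ i = (\<Sum>l\<in>UNIV. (P $ i $ l)\<^sup>2)"
  proof -
    have "P $ i $ i = (P ** P) $ i $ i" by (simp add: idem)
    also have "\<dots> = (\<Sum>l\<in>UNIV. P $ i $ l * P $ l $ i)" by (simp add: matrix_matrix_mult_def)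
    also have "\<dots> = (\<Sum>l\<in>UNIV. (P $ i $ l)\<^sup>2)"
      by (rule sum.cong[OF refl]) (metis sym power2_eq_square)
    finally show ?thesis .
  qed
  have le: "(P $ i $ l)\<^sup>2 \<le> P $ i $ i" for l
    unfolding dii by (rule member_le_sum) auto
  have "(P $ i $ i)\<^sup>2 \<le> P $ i $ i" using le[of i] .
  then have "P $ i $ i \<le> 1"
  proof (rule contrapos_pp)
    assume "\<not> P $ i $ i \<le> 1"
    then have "P $ i $ i * 1 < P $ i $ i * P $ i $ i" by (intro mult_strict_left_mono) auto
    then show "\<not> (P $ i $ i)\<^sup>2 \<le> P $ i $ i" by (simp add: power2_eq_square)
  qed
  then have "(P $ i $ j)\<^sup>2 \<le> 1" using le[of j] by simp
  then show ?thesis by (metis abs_le_square_iff abs_one one_power2)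
qed

lemma ph_bound:
  assumes "P \<in> grass k"
  shows "\<bar>ph t P e\<bar> \<le> 1"
  unfolding ph_def abs_prod using grass_entry[OF assms]
  by (intro prod_le_1) auto

lemma ph_cont: "continuous_on UNIV (\<lambda>P::'n::finite mat. ph t P e)"
  unfolding ph_def
  by (intro continuous_on_prod continuous_on_component continuous_on_id)

lemma approx_mono:
  "approx_cubature k t \<sigma> n P \<omega> e1 \<Longrightarrow> e1 \<le> e2 \<Longrightarrow> approx_cubature k t \<sigma> n P \<omega> e2"
  unfolding approx_cubature_def by (meson order_trans)

lemma approx_main:
  fixes \<sigma> :: "'n::finite mat measure" and \<omega> :: "nat \<Rightarrow> 'n mat" and \<mu> :: "(nat \<Rightarrow> 'n \<times> 'n) \<Rightarrow> real"
  assumes sp: "space \<sigma> = grass k" and n: "n > 0"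
    and int: "\<And>e. integrable \<sigma> (\<lambda>P. ph t P e)"
    and mu: "\<And>e. \<mu> e = (\<integral>P. ph t P e \<partial>\<sigma>)"
    and om: "\<And>j. j < n \<Longrightarrow> \<omega> j \<in> grass k"
  shows "approx_cubature k t \<sigma> n \<omega> (\<lambda>_. 1 / real n)
           (L2_set (\<lambda>e. \<Sum>j<n. ph t (\<omega> j) e - \<mu> e) (feat_idx t) / real n)"
  unfolding approx_cubature_def
proof (intro ballI allI impI)
  fix f m and Q :: "nat \<Rightarrow> 'n mat" and c :: "nat \<Rightarrow> real"
  assume Qg: "\<forall>i<m. Q i \<in> grass k"
    and frep: "\<forall>R\<in>grass k. f R = (\<Sum>i<m. c i * Kt t (Q i) R)"
    and one: "(\<Sum>i<m. \<Sum>j<m. c i * c j * Kt t (Q i) (Q j)) = 1"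
  define I where "I = (feat_idx t :: (nat \<Rightarrow> 'n \<times> 'n) set)"
  have finI: "finite I" unfolding I_def by (rule finite_feat_idx)
  define w where "w = (\<lambda>e. \<Sum>i<m. c i * ph t (Q i) e)"
  define S where "S = (\<lambda>e. \<Sum>j<n. ph t (\<omega> j) e - \<mu> e)"
  have symg: "transpose R = R" if "R \<in> grass k" for R using that by (simp add: grass_def)
  have fR: "f R = (\<Sum>e\<in>I. w e * ph t R e)" if "R \<in> grass k" for R
  proof -
    have "f R = (\<Sum>i<m. c i * (\<Sum>e\<in>I. ph t (Q i) e * ph t R e))"
      using frep that by (simp add: Kt_feat[OF symg[OF that]] I_def)
    also have "\<dots> = (\<Sum>i<m. \<Sum>e\<in>I. c i * ph t (Q i) e * ph t R e)"
      by (simp add: sum_distrib_left mult.assoc)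
    also have "\<dots> = (\<Sum>e\<in>I. \<Sum>i<m. c i * ph t (Q i) e * ph t R e)"
      by (rule sum.swap)
    also have "\<dots> = (\<Sum>e\<in>I. w e * ph t R e)"
      unfolding w_def by (simp add: sum_distrib_right)
    finally show ?thesis .
  qed
  have w1: "L2_set w I = 1"
  proof -
    have "(\<Sum>e\<in>I. (w e)\<^sup>2) = (\<Sum>i<m. \<Sum>j<m. c i * c j * (\<Sum>e\<in>I. ph t (Q i) e * ph t (Q j) e))"
    proof -
      have "(\<Sum>e\<in>I. (w e)\<^sup>2) = (\<Sum>e\<in>I. \<Sum>i<m. \<Sum>j<m. c i * c j * (ph t (Q i) e * ph t (Q j) e))"
        unfolding w_def power2_eq_square by (simp add: sum_product mult_ac)
      also have "\<dots> = (\<Sum>i<m. \<Sum>e\<in>I. \<Sum>j<m. c i * c j * (ph t (Q i) e * ph t (Q j) e))"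
        by (rule sum.swap)
      also have "\<dots> = (\<Sum>i<m. \<Sum>j<m. \<Sum>e\<in>I. c i * c j * (ph t (Q i) e * ph t (Q j) e))"
        by (rule sum.cong[OF refl], rule sum.swap)
      also have "\<dots> = (\<Sum>i<m. \<Sum>j<m. c i * c j * (\<Sum>e\<in>I. ph t (Q i) e * ph t (Q j) e))"
        by (simp add: sum_distrib_left)
      finally show ?thesis .
    qed
    also have "\<dots> = (\<Sum>i<m. \<Sum>j<m. c i * c j * Kt t (Q i) (Q j))"
      using Qg by (intro sum.cong refl) (simp add: Kt_feat symg I_def)
    finally show ?thesis using one by (simp add: L2_set_def)
  qed
  have intf: "(\<integral>R. f R \<partial>\<sigma>) = (\<Sum>e\<in>I. w e * \<mu> e)"
  proof -
    have "(\<integral>R. f R \<partial>\<sigma>) = (\<integral>R. (\<Sum>e\<in>I. w e * ph t R e) \<partial>\<sigma>)"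
      by (rule Bochner_Integration.integral_cong[OF refl]) (simp add: sp fR)
    also have "\<dots> = (\<Sum>e\<in>I. w e * \<mu> e)"
      using int by (simp add: integral_sum mu)
    finally show ?thesis .
  qed
  have "(\<Sum>j<n. 1 / real n * f (\<omega> j)) - (\<integral>R. f R \<partial>\<sigma>) = (\<Sum>e\<in>I. w e * S e) / real n"
  proof -
    have "(\<Sum>j<n. 1 / real n * f (\<omega> j)) = (\<Sum>j<n. \<Sum>e\<in>I. w e * ph t (\<omega> j) e) / real n"
      using om by (simp add: fR sum_divide_distrib)
    moreover have "(\<Sum>e\<in>I. w e * S e) = (\<Sum>j<n. \<Sum>e\<in>I. w e * ph t (\<omega> j) e) - real n * (\<Sum>e\<in>I. w e * \<mu> e)"
    proof -
      have "(\<Sum>e\<in>I. w e * S e) = (\<Sum>e\<in>I. \<Sum>j<n. w e * ph t (\<omega> j) e) - (\<Sum>e\<in>I. real n * (w e * \<mu> e))"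
        unfolding S_def by (simp add: sum_subtractf sum_distrib_left right_diff_distrib mult_ac)
      also have "(\<Sum>e\<in>I. \<Sum>j<n. w e * ph t (\<omega> j) e) = (\<Sum>j<n. \<Sum>e\<in>I. w e * ph t (\<omega> j) e)"
        by (rule sum.swap)
      finally show ?thesis by (simp add: sum_distrib_left)
    qed
    ultimately show ?thesis using n intf by (simp add: field_simps)
  qed
  moreover have "\<bar>(\<Sum>e\<in>I. w e * S e) / real n\<bar> \<le> L2_set S I / real n"
  proof -
    have "\<bar>\<Sum>e\<in>I. w e * S e\<bar> \<le> (\<Sum>e\<in>I. \<bar>w e\<bar> * \<bar>S e\<bar>)"
      by (rule order_trans[OF sum_abs]) (simp add: abs_mult)
    also have "\<dots> \<le> L2_set w I * L2_set S I" by (rule L2_set_mult_ineq)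
    finally show ?thesis using n w1 by (simp add: divide_right_mono)
  qed
  ultimately show "\<bar>(\<Sum>j<n. 1 / real n * f (\<omega> j)) - (\<integral>R. f R \<partial>\<sigma>)\<bar>
      \<le> L2_set (\<lambda>e. \<Sum>j<n. ph t (\<omega> j) e - \<mu> e) (feat_idx t) / real n"
    by (simp add: S_def I_def)
qed

lemma B_eq:
  fixes K lam N tau :: real
  assumes "K > 0" "lam < K" "N > 0"
  defines "a \<equiv> 1 - lam / K"
  shows "(sqrt (N * (K - lam + tau\<^sup>2 * K)))\<^sup>2 / (2 * (N * (sqrt (K - lam))\<^sup>2 + sqrt (K - lam) * sqrt (N * (K - lam + tau\<^sup>2 * K)) / 3))
       = (a + tau\<^sup>2) / (2 * (a + sqrt a * sqrt (a + tau\<^sup>2) / (3 * sqrt N)))"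
proof -
  have a: "a > 0" using assms by (simp add: a_def field_simps)
  have e1: "K - lam = a * K" using assms by (simp add: a_def field_simps)
  have e2: "K - lam + tau\<^sup>2 * K = (a + tau\<^sup>2) * K" using e1 by (simp add: algebra_simps)
  have q: "a + tau\<^sup>2 > 0" using a by (simp add: add_pos_nonneg)
  define sa where "sa = sqrt a"
  define sq where "sq = sqrt (a + tau\<^sup>2)"
  define sK where "sK = sqrt K"
  define sN where "sN = sqrt N"
  have pos: "sa > 0" "sq > 0" "sK > 0" "sN > 0" using a q assms by (auto simp: sa_def sq_def sK_def sN_def)
  have sqs: "sa\<^sup>2 = a" "sq\<^sup>2 = a + tau\<^sup>2" "sK\<^sup>2 = K" "sN\<^sup>2 = N"
    using a q assms by (auto simp: sa_def sq_def sK_def sN_def)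
  have r1: "sqrt (K - lam) = sa * sK" unfolding e1 sa_def sK_def by (simp add: real_sqrt_mult)
  have r2: "sqrt (N * (K - lam + tau\<^sup>2 * K)) = sN * sq * sK" unfolding e2 sN_def sq_def sK_def by (simp add: real_sqrt_mult)
  have eN: "N = sN * sN" and ea: "a = sa * sa" and eq: "a + tau\<^sup>2 = sq * sq"
    using sqs by (simp_all add: power2_eq_square)
  have "(sN * sq * sK)\<^sup>2 / (2 * (N * (sa * sK)\<^sup>2 + sa * sK * (sN * sq * sK) / 3))
      = (sq * sq) / (2 * (sa * sa + sa * sq / (3 * sN)))"
  proof -
    have num: "(sN * sq * sK)\<^sup>2 = (sK * sK * sN) * (sN * (sq * sq))" by (simp add: power2_eq_square mult_ac)
    have den: "2 * (sN * sN * (sa * sK)\<^sup>2 + sa * sK * (sN * sq * sK) / 3) = (sK * sK * sN) * (2 * (sN * (sa * sa) + sa * sq / 3))"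
      by (simp add: power2_eq_square algebra_simps)
    have den2: "sN * (2 * (sa * sa + sa * sq / (3 * sN))) = 2 * (sN * (sa * sa) + sa * sq / 3)"
      using pos by (simp add: algebra_simps)
    have "(sN * sq * sK)\<^sup>2 / (2 * (sN * sN * (sa * sK)\<^sup>2 + sa * sK * (sN * sq * sK) / 3))
        = (sN * (sq * sq)) / (2 * (sN * (sa * sa) + sa * sq / 3))"
      unfolding num den using pos by (intro mult_divide_mult_cancel_left) simp
    also have "\<dots> = (sN * (sq * sq)) / (sN * (2 * (sa * sa + sa * sq / (3 * sN))))" by (simp only: den2)
    also have "\<dots> = (sq * sq) / (2 * (sa * sa + sa * sq / (3 * sN)))"
      using pos by (intro mult_divide_mult_cancel_left) simp
    finally show ?thesis unfolding eN .
  qed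
  then show ?thesis
    unfolding r1 r2 sa_def[symmetric] sq_def[symmetric] sN_def[symmetric] unfolding eq ea[symmetric] .
qed

theorem corollary5p4:
  fixes \<sigma> \<nu> :: "'n::finite mat measure" and k t n :: nat and \<tau> :: real
  assumes "1 \<le> k" and "k < CARD('n)" and "1 \<le> n" and "\<tau> > 0"
    and "orth_inv_prob k \<sigma>"
    and "prob_cubature k t \<sigma> \<nu>"
  defines "lam \<equiv> lambda_t t \<sigma>"
  defines "\<Psi> \<equiv> (\<tau>^2 / 2) / ((1 - lam / real k ^ t) + \<tau> / (3 * sqrt (real n)))"
  defines "r \<equiv> 1 + 6 / (real n * \<tau>^2 *
                 (ln (1 + \<tau> / (sqrt (real n) * (1 - lam / real k ^ t))))^2)"
  defines "M \<equiv> PiM {..<n} (\<lambda>_. \<nu>)"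
  shows "\<exists>E\<in>sets M.
           E \<subseteq> {Ps \<in> space M. approx_cubature k t \<sigma> n Ps (\<lambda>_. 1 / real n)
                   (sqrt (((1 + \<tau>^2) * real k ^ t - lam) / real n))} \<and>
           measure M E \<ge> 1 - 4 * exp (- \<Psi>) * r"
proof -
  have sigS: "prob_space \<sigma>" "sets \<sigma> = sets (restrict_space borel (grass k))"
    using assms(5) unfolding orth_inv_prob_def by blast+
  have nuS: "prob_space \<nu>" "sets \<nu> = sets (restrict_space borel (grass k))"
    and cub: "\<And>f. f \<in> Pol t \<Longrightarrow> (\<integral>P. f P \<partial>\<nu>) = (\<integral>P. f P \<partial>\<sigma>)"
    using assms(6) unfolding prob_cubature_def by blast+
  interpret S: prob_space \<sigma> by (fact sigS(1))
  interpret N: prob_space \<nu> by (fact nuS(1))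
  have spS: "space \<sigma> = grass k" by (rule space_sigma[OF sigS(2)])
  have spN: "space \<nu> = grass k" by (rule space_sigma[OF nuS(2)])
  define I where "I = (feat_idx t :: (nat \<Rightarrow> 'n \<times> 'n) set)"
  have finI: "finite I" unfolding I_def by (rule finite_feat_idx)
  define \<mu> where "\<mu> = (\<lambda>e. \<integral>P. ph t P e \<partial>\<sigma>)"
  have phB: "(\<lambda>P. ph t P e) \<in> borel_measurable (restrict_space borel (grass k))" for e
    by (intro measurable_restrict_space1 borel_measurable_continuous_onI ph_cont)
  have phmS: "(\<lambda>P. ph t P e) \<in> borel_measurable \<sigma>" for e
    using phB measurable_cong_sets[OF sigS(2) refl] by blast
  have phmN: "(\<lambda>P. ph t P e) \<in> borel_measurable \<nu>" for e
    using phB measurable_cong_sets[OF nuS(2) refl] by blast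
  have intS: "integrable \<sigma> (\<lambda>P. ph t P e)" for e
    by (rule S.integrable_const_bound[where B=1]) (auto intro!: AE_I2 simp: spS ph_bound phmS)
  have intN: "integrable \<nu> (\<lambda>P. ph t P e)" for e
    by (rule N.integrable_const_bound[where B=1]) (auto intro!: AE_I2 simp: spN ph_bound phmN)
  have muN: "(\<integral>P. ph t P e \<partial>\<nu>) = \<mu> e" for e
    unfolding \<mu>_def by (rule cub[OF ph_Pol])
  have symg: "transpose R = R" if "R \<in> grass k" for R using that by (simp add: grass_def)
  have gfeat: "(\<integral>Q. Kt t P Q \<partial>\<sigma>) = (\<Sum>e\<in>I. ph t P e * \<mu> e)" if "P \<in> grass k" for P
  proof -
    have "(\<integral>Q. Kt t P Q \<partial>\<sigma>) = (\<integral>Q. (\<Sum>e\<in>I. ph t P e * ph t Q e) \<partial>\<sigma>)"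
      by (rule Bochner_Integration.integral_cong[OF refl]) (simp add: spS Kt_feat symg I_def)
    also have "\<dots> = (\<Sum>e\<in>I. ph t P e * \<mu> e)"
      using intS by (simp add: integral_sum \<mu>_def)
    finally show ?thesis .
  qed
  obtain P0 where P0: "P0 \<in> (grass k :: 'n mat set)" using S.not_empty spS by auto
  have lam_g: "lam = (\<integral>Q. Kt t P Q \<partial>\<sigma>)" if "P \<in> grass k" for P
  proof -
    have "lam = (\<integral>P. (\<integral>Q. Kt t P Q \<partial>\<sigma>) \<partial>\<sigma>)" by (simp add: lam_def lambda_t_def)
    also have "\<dots> = (\<integral>P. (\<integral>Q. Kt t P0 Q \<partial>\<sigma>) \<partial>\<sigma>)"
      by (rule Bochner_Integration.integral_cong[OF refl]) (simp add: spS g_const[OF assms(5) P0])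
    also have "\<dots> = (\<integral>Q. Kt t P0 Q \<partial>\<sigma>)" by (simp add: S.prob_space)
    also have "\<dots> = (\<integral>Q. Kt t P Q \<partial>\<sigma>)" by (rule g_const[OF assms(5) that P0])
    finally show ?thesis .
  qed
  have lam_sq: "lam = (\<Sum>e\<in>I. (\<mu> e)\<^sup>2)"
  proof -
    have "lam = (\<integral>P. (\<integral>Q. Kt t P Q \<partial>\<sigma>) \<partial>\<sigma>)" by (simp add: lam_def lambda_t_def)
    also have "\<dots> = (\<integral>P. (\<Sum>e\<in>I. ph t P e * \<mu> e) \<partial>\<sigma>)"
      by (rule Bochner_Integration.integral_cong[OF refl]) (simp add: spS gfeat)
    also have "\<dots> = (\<Sum>e\<in>I. (\<mu> e)\<^sup>2)"
      using intS by (simp add: integral_sum \<mu>_def power2_eq_square)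
    finally show ?thesis .
  qed
  have lam0: "lam \<ge> 0" unfolding lam_sq by (simp add: sum_nonneg)
  define K where "K = real k ^ t"
  have K0: "K > 0" using assms(1) by (simp add: K_def)
  have Kdiag: "(\<Sum>e\<in>I. (ph t P e)\<^sup>2) = K" if "P \<in> grass k" for P
  proof -
    have "(\<Sum>e\<in>I. (ph t P e)\<^sup>2) = Kt t P P"
      by (simp add: Kt_feat[OF symg[OF that]] I_def power2_eq_square)
    also have "\<dots> = K" using that by (simp add: Kt_def mat_inner_def grass_def K_def)
    finally show ?thesis .
  qed
  define X where "X = (\<lambda>P e. ph t P e - \<mu> e)"
  have normX: "(L2_set (X P) I)\<^sup>2 = K - lam" if "P \<in> grass k" for P
  proof -
    have "(L2_set (X P) I)\<^sup>2 = (\<Sum>e\<in>I. (X P e)\<^sup>2)" by (simp add: L2_set_def sum_nonneg)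
    also have "\<dots> = (\<Sum>e\<in>I. (ph t P e)\<^sup>2) - 2 * (\<Sum>e\<in>I. ph t P e * \<mu> e) + (\<Sum>e\<in>I. (\<mu> e)\<^sup>2)"
      by (simp add: X_def power2_diff sum.distrib sum_subtractf sum_distrib_left mult_ac)
    also have "\<dots> = K - lam"
      using Kdiag[OF that] gfeat[OF that] lam_g[OF that] lam_sq by simp
    finally show ?thesis .
  qed
  have Klam: "K - lam \<ge> 0" using normX[OF P0] by (metis zero_le_power2)
  have A0: "((1 + \<tau>^2) * real k ^ t - lam) / real n \<ge> 0"
  proof -
    have "(1 + \<tau>^2) * real k ^ t - lam = (K - lam) + \<tau>^2 * K" by (simp add: K_def algebra_simps)
    also have "\<dots> \<ge> 0" using Klam K0 by (intro add_nonneg_nonneg mult_nonneg_nonneg) auto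
    finally show ?thesis by simp
  qed
  have intX: "integrable \<nu> (\<lambda>P. X P e)" for e
    unfolding X_def using intN by simp
  have meanX: "(\<integral>P. X P e \<partial>\<nu>) = 0" for e
    unfolding X_def using intN by (simp add: muN N.prob_space)
  have spM: "space M = PiE {..<n} (\<lambda>_. grass k)" by (simp add: M_def space_PiM spN)
  interpret PM: prob_space M unfolding M_def by (intro prob_space_PiM) (simp add: nuS(1))
  have n0: "n > 0" using assms(3) by simp
  define \<epsilon> where "\<epsilon> = sqrt (((1 + \<tau>^2) * real k ^ t - lam) / real n)"
  have appr: "approx_cubature k t \<sigma> n \<omega> (\<lambda>_. 1 / real n) (L2_set (\<lambda>e. \<Sum>j<n. X (\<omega> j) e) I / real n)"
    if "\<omega> \<in> space M" for \<omega>
    unfolding X_def I_def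
    by (rule approx_main[OF spS n0 intS]) (use that spM \<mu>_def in auto)
  have r1: "r \<ge> 1" unfolding r_def by (simp add: zero_le_mult_iff)
  show ?thesis
  proof (cases "K - lam = 0")
    case True
    have X0: "X P e = 0" if "P \<in> grass k" "e \<in> I" for P e
    proof -
      have "L2_set (X P) I = 0" using normX[OF that(1)] True by simp
      then show ?thesis using that(2) finI by (simp add: L2_set_eq_0_iff)
    qed
    have "space M \<subseteq> {Ps \<in> space M. approx_cubature k t \<sigma> n Ps (\<lambda>_. 1 / real n) \<epsilon>}"
    proof safe
      fix \<omega> assume om: "\<omega> \<in> space M"
      have "(\<lambda>e. \<Sum>j<n. X (\<omega> j) e) = (\<lambda>e. if e \<in> I then 0 else \<Sum>j<n. X (\<omega> j) e)"
        using om spM X0 by (auto intro!: ext sum.neutral simp: PiE_iff)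
      then have "L2_set (\<lambda>e. \<Sum>j<n. X (\<omega> j) e) I = 0" by (simp add: L2_set_def)
      then show "approx_cubature k t \<sigma> n \<omega> (\<lambda>_. 1 / real n) \<epsilon>"
        using appr[OF om] by (rule_tac approx_mono) (use A0 in \<open>auto simp: \<epsilon>_def\<close>)
    qed
    moreover have "measure M (space M) \<ge> 1 - 4 * exp (- \<Psi>) * r"
    proof -
      have "0 \<le> 4 * exp (- \<Psi>) * r" using r1 by simp
      then show ?thesis by (simp add: PM.prob_space)
    qed
    ultimately show ?thesis unfolding \<epsilon>_def by (intro bexI[of _ "space M"]) auto
  next
    case False
    then have Kl: "K - lam > 0" using Klam by simp
    define L where "L = sqrt (K - lam)"
    define u where "u = sqrt (real n * (K - lam + \<tau>\<^sup>2 * K))"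
    have L0: "L > 0" using Kl by (simp add: L_def)
    have u0: "u > 0" using Kl K0 n0 by (simp add: u_def add_pos_nonneg)
    have bndX: "L2_set (X y) I \<le> L" if "y \<in> space \<nu>" for y
      using normX[of y] that spN by (simp add: L_def real_le_rsqrt)
    define Bad where "Bad = {\<omega>\<in>space M. u \<le> L2_set (\<lambda>c. \<Sum>j<n. X (\<omega> j) c) I}"
    have BadS: "Bad \<in> sets M" and Badm: "measure M Bad \<le> 2 * exp (- (u\<^sup>2 / (2 * (real n * L\<^sup>2 + L * u / 3))))"
      using tail_bound[OF nuS(1) finI L0 u0 n0 intX bndX meanX] unfolding Bad_def M_def by auto
    define E where "E = space M - Bad"
    have ES: "E \<in> sets M" unfolding E_def using BadS by auto
    have "u / real n = \<epsilon>"
    proof -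
      define B where "B = K - lam + \<tau>\<^sup>2 * K"
      have sn: "sqrt (real n) > 0" using n0 by simp
      have "u / real n = sqrt (real n) * sqrt B / (sqrt (real n) * sqrt (real n))"
        by (simp add: u_def B_def real_sqrt_mult)
      also have "\<dots> = sqrt B / sqrt (real n)" using sn by (simp only: mult_divide_mult_cancel_left_if) simp
      also have "\<dots> = sqrt (B / real n)" by (simp add: real_sqrt_divide)
      finally have "u / real n = sqrt ((K - lam + \<tau>\<^sup>2 * K) / real n)" by (simp add: B_def)
      also have "\<dots> = \<epsilon>" by (simp add: \<epsilon>_def K_def algebra_simps)
      finally show ?thesis .
    qed
    have Esub: "E \<subseteq> {Ps \<in> space M. approx_cubature k t \<sigma> n Ps (\<lambda>_. 1 / real n) \<epsilon>}"
    proof safe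
      fix \<omega> assume "\<omega> \<in> E"
      then have om: "\<omega> \<in> space M" and lt: "L2_set (\<lambda>c. \<Sum>j<n. X (\<omega> j) c) I < u"
        by (auto simp: E_def Bad_def)
      show "\<omega> \<in> space M" by fact
      show "approx_cubature k t \<sigma> n \<omega> (\<lambda>_. 1 / real n) \<epsilon>"
        using appr[OF om] apply (rule approx_mono)
      proof -
        have "L2_set (\<lambda>e. \<Sum>j<n. X (\<omega> j) e) I / real n \<le> u / real n"
          using lt n0 by (intro divide_right_mono) auto
        then show "L2_set (\<lambda>e. \<Sum>j<n. X (\<omega> j) e) I / real n \<le> \<epsilon>" using \<open>u / real n = \<epsilon>\<close> by simp
      qed
    qed
    define a where "a = 1 - lam / K"
    have a: "0 < a" "a \<le> 1" using Kl K0 lam0 by (auto simp: a_def field_simps)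
    have BPsi: "\<Psi> \<le> u\<^sup>2 / (2 * (real n * L\<^sup>2 + L * u / 3))"
    proof -
      have "u\<^sup>2 / (2 * (real n * L\<^sup>2 + L * u / 3)) = (a + \<tau>\<^sup>2) / (2 * (a + sqrt a * sqrt (a + \<tau>\<^sup>2) / (3 * sqrt (real n))))"
        unfolding u_def L_def a_def by (rule B_eq) (use K0 Kl n0 in auto)
      moreover have "\<Psi> = (\<tau>\<^sup>2 / 2) / (a + \<tau> / (3 * sqrt (real n)))"
        by (simp add: \<Psi>_def a_def K_def)
      ultimately show ?thesis using final_calc[of "real n" a \<tau>] a n0 assms(4) by simp
    qed
    have mE: "measure M E = 1 - measure M Bad" unfolding E_def by (rule PM.prob_compl[OF BadS])
    have "measure M Bad \<le> 4 * exp (- \<Psi>) * r"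
    proof -
      have "exp (- (u\<^sup>2 / (2 * (real n * L\<^sup>2 + L * u / 3)))) \<le> exp (- \<Psi>)" using BPsi by simp
      then have "measure M Bad \<le> 2 * exp (- \<Psi>)" using Badm by linarith
      also have "\<dots> \<le> 4 * exp (- \<Psi>) * r" using r1 by (simp add: mult_left_le)
      finally show ?thesis .
    qed
    then have "measure M E \<ge> 1 - 4 * exp (- \<Psi>) * r" using mE by linarith
    with ES Esub show ?thesis unfolding \<epsilon>_def by blast
  qed
qed

end
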